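(* Let $A\in\mathbb{R}^{m\times n}$, let $T$ be an ordered subset of $r$ elements of $\{1,\dots,n\}$, and let $\hat A:=A[:,T]$ be the $m\times r$ submatrix of $A$ formed by the columns $T$, with $\mathrm{rank}(\hat A)=r$. Let $E:=\mathrm{sign}(\hat A^+)\in\mathbb{R}^{r\times m}$. Then there exist a matrix $W\in\mathbb{R}^{m\times n}$ and a skew-symmetric matrix $U\in\mathbb{R}^{m\times m}$ such that $\hat A^\top W A^\top+\hat A^\top U=E$ and $\langle A,W\rangle=\|\hat A^+\|_1$.
   Context: $\hat A^+$ is the Moore–Penrose pseudoinverse of $\hat A$. $\mathrm{sign}$ is applied entrywise, with $\mathrm{sign}(x)=x/|x|$ for $x\ne 0$ and $\mathrm{sign}(0)=0$. $\langle X,Y\rangle=\mathrm{trace}(X^\top Y)=\sum_{ij}x_{ij}y_{ij}$, and $\|H\|_1=\sum_{i,j}|H_{ij}|$. *)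

theory Defs
  imports "HOL-Analysis.Analysis"
begin

definition pinv :: "real^'c^'r \<Rightarrow> real^'r^'c" where
  "pinv A = (THE X. A ** X ** A = A \<and> X ** A ** X = X \<and>
                    transpose (A ** X) = A ** X \<and> transpose (X ** A) = X ** A)"

text \<open>Columns of A selected (in order) by the injective index map T.\<close>
definition col_submatrix :: "real^'n^'m \<Rightarrow> ('r \<Rightarrow> 'n) \<Rightarrow> real^'r^'m" where
  "col_submatrix A T = (\<chi> i j. A $ i $ T j)"

text \<open>Entrywise sign; sgn on reals is x/|x| for x \<noteq> 0 and 0 at 0.\<close>
definition sign_mat :: "real^'c^'r \<Rightarrow> real^'c^'r" where
  "sign_mat A = (\<chi> i j. sgn (A $ i $ j))"

definition frob_inner :: "real^'c^'r \<Rightarrow> real^'c^'r \<Rightarrow> real" where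
  "frob_inner X Y = (\<Sum>i\<in>UNIV. \<Sum>j\<in>UNIV. X $ i $ j * Y $ i $ j)"

definition entry_norm1 :: "real^'c^'r \<Rightarrow> real" where
  "entry_norm1 H = (\<Sum>i\<in>UNIV. \<Sum>j\<in>UNIV. \<bar>H $ i $ j\<bar>)"

end

theory Submission
  imports Defs
begin

lemma pinv_full:
  fixes B :: "real^'r^'m"
  assumes inj: "inj ((*v) B)"
  shows "B ** pinv B ** B = B \<and> pinv B ** B ** pinv B = pinv B \<and>
         transpose (B ** pinv B) = B ** pinv B \<and> pinv B ** B = mat 1"
proof -
  obtain L where L: "L ** B = mat 1" using inj matrix_left_invertible_injective by blast
  have ker: "\<forall>x. (transpose B ** B) *v x = 0 \<longrightarrow> x = 0"
  proof (intro allI impI)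
    fix x assume h: "(transpose B ** B) *v x = 0"
    have "inner (B *v x) (B *v x) = inner (x v* transpose B) (B *v x)" by simp
    also have "\<dots> = inner x (transpose B *v (B *v x))" by (rule dot_lmul_matrix)
    also have "\<dots> = 0" using h by (simp add: matrix_vector_mul_assoc)
    finally have "B *v x = 0" by simp
    then have "L *v (B *v x) = 0" by simp
    then show "x = 0" using L by (simp add: matrix_vector_mul_assoc)
  qed
  obtain G where G: "G ** (transpose B ** B) = mat 1"
    using ker matrix_left_invertible_ker by blast
  have GT: "(transpose B ** B) ** transpose G = mat 1"
    using arg_cong[OF G, of transpose] by (simp add: matrix_transpose_mul)
  have Gs: "transpose G = G"
  proof -
    have "G = G ** ((transpose B ** B) ** transpose G)" using GT by simp
    also have "\<dots> = (G ** (transpose B ** B)) ** transpose G" by (simp add: matrix_mul_assoc)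
    finally show ?thesis using G by simp
  qed
  define P where "P = (\<lambda>X. B ** X ** B = B \<and> X ** B ** X = X \<and>
                    transpose (B ** X) = B ** X \<and> transpose (X ** B) = X ** B)"
  define X0 where "X0 = G ** transpose B"
  have X0B: "X0 ** B = mat 1" using G by (simp add: X0_def matrix_mul_assoc)
  have PX0: "P X0"
    unfolding P_def
  proof (intro conjI)
    show "B ** X0 ** B = B" using X0B by (simp add: matrix_mul_assoc[symmetric])
    show "X0 ** B ** X0 = X0" using X0B by simp
    show "transpose (B ** X0) = B ** X0"
      by (simp add: X0_def matrix_transpose_mul Gs matrix_mul_assoc)
    show "transpose (X0 ** B) = X0 ** B" using X0B by simp
  qed
  have uniq: "Y = X0" if PY: "P Y" for Y
  proof -
    have YB: "Y ** B = mat 1" "X0 ** B = mat 1"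
    proof -
      have "L ** (B ** Y ** B) = L ** B" using PY by (simp add: P_def)
      then show "Y ** B = mat 1" using L by (simp add: matrix_mul_assoc)
    qed (rule X0B)
    have s1: "transpose (B ** Y) = B ** Y" "transpose (B ** X0) = B ** X0"
      using PY PX0 by (auto simp: P_def)
    have "B ** Y = transpose (B ** Y)" using s1 by simp
    also have "\<dots> = transpose Y ** transpose B" by (simp add: matrix_transpose_mul)
    also have "\<dots> = transpose Y ** transpose (B ** X0 ** B)"
      using PX0 by (simp add: P_def)
    also have "\<dots> = transpose (B ** Y) ** transpose (B ** X0)"
      by (simp add: matrix_transpose_mul matrix_mul_assoc)
    also have "\<dots> = B ** Y ** (B ** X0)" using s1 by simp
    also have "\<dots> = B ** (Y ** B) ** X0" by (simp add: matrix_mul_assoc)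
    also have "\<dots> = B ** X0" using YB by simp
    finally have e: "B ** Y = B ** X0" .
    have "Y = (Y ** B) ** Y" using YB by simp
    also have "\<dots> = Y ** (B ** Y)" by (simp add: matrix_mul_assoc)
    also have "\<dots> = Y ** (B ** X0)" using e by simp
    also have "\<dots> = X0" using YB by (simp add: matrix_mul_assoc)
    finally show ?thesis .
  qed
  have "pinv B = (THE X. P X)" unfolding pinv_def P_def by (rule refl)
  also have "\<dots> = X0" using PX0 uniq by (rule the_equality)
  finally have "pinv B = X0" .
  then show ?thesis using PX0 X0B by (simp add: P_def)
qed

lemma my_sub_ldistrib: "(A::real^'b^'a) ** (B - C) = A ** B - A ** C"
  by (simp add: matrix_matrix_mult_def vec_eq_iff sum_subtractf algebra_simps)

lemma frob_trace: "frob_inner (X::real^'c^'r) Y = trace (transpose X ** Y)"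
  unfolding frob_inner_def trace_def matrix_matrix_mult_def transpose_def
  apply simp
  apply (subst sum.swap)
  apply (simp add: mult.commute)
  done

theorem lemma3p6:
  fixes A :: "real^'n^'m" and T :: "'r::finite \<Rightarrow> 'n"
  assumes "inj T"
    and "rank (col_submatrix A T) = CARD('r)"
  shows "\<exists>(W :: real^'n^'m) (U :: real^'m^'m).
           transpose U = - U \<and>
           transpose (col_submatrix A T) ** W ** transpose A + transpose (col_submatrix A T) ** U
             = sign_mat (pinv (col_submatrix A T)) \<and>
           frob_inner A W = entry_norm1 (pinv (col_submatrix A T))"
proof -
  define Ah where "Ah = col_submatrix A T"
  define X where "X = pinv Ah"
  define E where "E = sign_mat X"
  have "inj ((*v) Ah)" using assms(2) full_rank_injective unfolding Ah_def by blast
  note P = pinv_full[OF this, folded X_def]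
  define Wh where "Wh = transpose E ** X ** transpose X"
  define W :: "real^'n^'m" where "W = (\<chi> i k. if k \<in> range T then Wh $ i $ inv T k else 0)"
  define U where "U = transpose X ** E - transpose (transpose X ** E)"
  have reidx: "(\<Sum>k\<in>UNIV. (if k \<in> range T then f (inv T k) else 0) * g k) = (\<Sum>s\<in>UNIV. f s * g (T s))"
    for f :: "'r \<Rightarrow> real" and g
  proof -
    have "(\<Sum>k\<in>UNIV. (if k \<in> range T then f (inv T k) else 0) * g k)
        = (\<Sum>k\<in>range T. f (inv T k) * g k)"
    proof -
      have "(\<lambda>k. (if k \<in> range T then f (inv T k) else 0) * g k)
          = (\<lambda>k. if k \<in> range T then f (inv T k) * g k else 0)" by auto
      moreover have "(\<Sum>k\<in>UNIV. if k \<in> range T then f (inv T k) * g k else 0)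
          = (\<Sum>k\<in>range T. f (inv T k) * g k)"
        using sum.inter_restrict[of UNIV "\<lambda>k. f (inv T k) * g k" "range T"] by simp
      ultimately show ?thesis by (simp only:)
    qed
    also have "\<dots> = (\<Sum>s\<in>UNIV. f s * g (T s))"
      using assms(1) by (simp add: sum.reindex)
    finally show ?thesis .
  qed
  have C1: "W ** transpose A = Wh ** transpose Ah"
    unfolding matrix_matrix_mult_def transpose_def W_def Ah_def col_submatrix_def
    by (simp add: reidx)
  have C2: "frob_inner A W = frob_inner Ah Wh"
    unfolding frob_inner_def W_def Ah_def col_submatrix_def
    using reidx by (simp add: mult.commute)
  have XXA: "X ** transpose X ** transpose Ah = X"
  proof -
    have "X ** transpose X ** transpose Ah = X ** transpose (Ah ** X)"
      by (simp add: matrix_transpose_mul matrix_mul_assoc)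
    also have "\<dots> = X" using P by (simp add: matrix_mul_assoc)
    finally show ?thesis .
  qed
  have XAT: "transpose Ah ** transpose X = mat 1"
    using P by (metis matrix_transpose_mul transpose_mat)
  have eq1: "transpose Ah ** W ** transpose A + transpose Ah ** U = E"
  proof -
    have "transpose Ah ** W ** transpose A = transpose Ah ** (W ** transpose A)"
      by (simp add: matrix_mul_assoc)
    also have "\<dots> = transpose Ah ** (transpose E ** (X ** transpose X ** transpose Ah))"
      unfolding C1 Wh_def by (simp add: matrix_mul_assoc)
    also have "\<dots> = transpose Ah ** transpose E ** X"
      unfolding XXA by (simp add: matrix_mul_assoc)
    finally have "transpose Ah ** W ** transpose A = transpose Ah ** transpose E ** X" .
    moreover have "transpose Ah ** U = E - transpose Ah ** transpose E ** X"
      using XAT by (simp add: U_def my_sub_ldistrib matrix_transpose_mul matrix_mul_assoc)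
    ultimately show ?thesis by simp
  qed
  have eq2: "frob_inner Ah Wh = entry_norm1 X"
  proof -
    have "frob_inner Ah Wh = trace ((transpose Ah ** transpose E ** X) ** transpose X)"
      by (simp add: frob_trace Wh_def matrix_mul_assoc)
    also have "\<dots> = trace (transpose X ** (transpose Ah ** transpose E ** X))"
      by (rule trace_mul_sym)
    also have "\<dots> = trace ((transpose (Ah ** X) ** transpose E) ** X)"
      by (simp add: matrix_transpose_mul matrix_mul_assoc)
    also have "\<dots> = trace ((Ah ** X ** transpose E) ** X)"
      using P by simp
    also have "\<dots> = trace (X ** (Ah ** X ** transpose E))"
      by (rule trace_mul_sym)
    also have "\<dots> = trace (X ** transpose E)"
      using P by (simp add: matrix_mul_assoc)
    also have "\<dots> = trace (transpose E ** X)"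
      by (rule trace_mul_sym)
    also have "\<dots> = frob_inner E X" by (simp add: frob_trace)
    also have "\<dots> = entry_norm1 X"
    proof -
      have sg: "sgn x * x = \<bar>x\<bar>" for x :: real by (auto simp: sgn_real_def)
      show ?thesis
        unfolding frob_inner_def entry_norm1_def E_def sign_mat_def by (simp add: sg)
    qed
    finally show ?thesis .
  qed
  have "transpose U = - U" by (simp add: U_def transpose_def vec_eq_iff)
  moreover have "frob_inner A W = entry_norm1 X" using C2 eq2 by simp
  ultimately have "\<exists>(W :: real^'n^'m) (U :: real^'m^'m). transpose U = - U \<and>
     transpose Ah ** W ** transpose A + transpose Ah ** U = E \<and> frob_inner A W = entry_norm1 X"
    using eq1 by blast
  then show ?thesis unfolding Ah_def X_def E_def .
qed

end
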